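(* Assume $Y = \{y \in \mathbb{R}^m : Ay = b,\ y\ge 0\}$ with $A$ of full row rank, and that the linear program $z^* := \min\{c^\top x + d^\top y : Tx + Qy = h,\ x\in X,\ y\in Y\}$ has a finite optimal value. Let $\hat\alpha$ be an optimal solution of $$\max_{\alpha\in\mathbb{R}^p}\Big\{-\alpha^\top h + \sigma_X(c + T^\top\alpha) + \sigma_Y(Q^\top\alpha + d)\Big\},$$ let $B$ be an optimal basis for $\min\{(Q^\top\hat\alpha + d)^\top y : y \in Y\}$, and let $C_B$ be the associated corner. Then $$\inf\{c^\top x + \theta : x \in X,\ (h - Tx,\theta) \in \mathrm{epi}(f_{C_B})\} = z^*,$$ i.e., the facets of $\mathrm{epi}(f_{C_B})$ (corner Benders' cuts) together with $x\in X$ recover the bound $z^*$; moreover the Lagrangian cut $\hat\alpha^\top(h - Tx) + \theta \ge \sigma_{\mathrm{epi}(f_Y)}(\hat\alpha,1)$ is valid for $\{(x,\theta) : (h-Tx,\theta)\in\mathrm{epi}(f_{C_B})\}$.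
   Context: $X\subseteq\mathbb{R}^n$ is a nonempty polyhedron; $T\in\mathbb{R}^{p\times n}$, $Q\in\mathbb{R}^{p\times m}$, $h\in\mathbb{R}^p$, $c\in\mathbb{R}^n$, $d\in\mathbb{R}^m$. For $\mathcal{X}\subseteq\mathbb{R}^k$, $\sigma_{\mathcal{X}}(\alpha) := \inf_{x\in\mathcal{X}}\alpha^\top x$ ($\sigma_{\mathcal{X}}(\alpha,\alpha_0)$ at a concatenated vector). For $\mathcal{Y}\subseteq\mathbb{R}^m$, $f_{\mathcal{Y}}(w) := \inf_{y\in\mathcal{Y}}\{d^\top y : Qy = w\}$, $\mathrm{epi}(f_{\mathcal{Y}}) := \{(w,\theta) : \theta \ge f_{\mathcal{Y}}(w)\}$. A basis is a set $B\subseteq[m]$ with $A_B$ square invertible, $N := [m]\setminus B$; $B$ is optimal for $\min\{g^\top y : y\in Y\}$ if $A_B^{-1}b\ge 0$ and $g_N^\top - g_B^\top A_B^{-1}A_N \ge 0$. The corner associated with $B$ is $C_B := \{y\in\mathbb{R}^m : Ay = b,\ y_N \ge 0\}$. *)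

theory Defs
  imports "HOL-Analysis.Analysis"
begin

text \<open>Support function (infimum of a linear functional over a set), extended-real valued.\<close>
definition sigma :: "'a::real_inner set \<Rightarrow> 'a \<Rightarrow> ereal" where
  "sigma S \<alpha> = (INF s\<in>S. ereal (\<alpha> \<bullet> s))"

text \<open>Value function f_Y(w) = inf { d'y : y in Y, Q y = w }.\<close>
definition fval :: "real^'m \<Rightarrow> real^'m^'p \<Rightarrow> (real^'m) set \<Rightarrow> real^'p \<Rightarrow> ereal" where
  "fval d Q Y w = (INF y\<in>{y\<in>Y. Q *v y = w}. ereal (d \<bullet> y))"

definition epi :: "(real^'p \<Rightarrow> ereal) \<Rightarrow> ((real^'p) \<times> real) set" where
  "epi f = {(w, \<theta>). ereal \<theta> \<ge> f w}"

text \<open>B is a basis of A: A_B (columns of A indexed by B) is square and invertible,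
  i.e. |B| = number of rows and A_B has trivial kernel.\<close>
definition is_basis :: "real^'m^'k \<Rightarrow> 'm set \<Rightarrow> bool" where
  "is_basis A B \<longleftrightarrow> card B = CARD('k) \<and>
     (\<forall>y. (\<forall>j. j \<notin> B \<longrightarrow> y $ j = 0) \<and> A *v y = 0 \<longrightarrow> y = 0)"

text \<open>The vector with B-part A_B^{-1} b and zero N-part.\<close>
definition basic_sol :: "real^'m^'k \<Rightarrow> real^'k \<Rightarrow> 'm set \<Rightarrow> real^'m" where
  "basic_sol A b B = (THE y. (\<forall>j. j \<notin> B \<longrightarrow> y $ j = 0) \<and> A *v y = b)"

text \<open>The multiplier vector pi with pi' = g_B' A_B^{-1}, i.e. pi' A_B = g_B'.\<close>
definition basis_mult :: "real^'m^'k \<Rightarrow> real^'m \<Rightarrow> 'm set \<Rightarrow> real^'k" where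
  "basis_mult A g B = (THE \<pi>. \<forall>j\<in>B. (transpose A *v \<pi>) $ j = g $ j)"

text \<open>B is optimal for min { g'y : A y = b, y \<ge> 0 }:
  A_B^{-1} b \<ge> 0 and g_N' - g_B' A_B^{-1} A_N \<ge> 0.\<close>
definition optimal_basis :: "real^'m^'k \<Rightarrow> real^'k \<Rightarrow> real^'m \<Rightarrow> 'm set \<Rightarrow> bool" where
  "optimal_basis A b g B \<longleftrightarrow> is_basis A B \<and>
     (\<forall>j\<in>B. basic_sol A b B $ j \<ge> 0) \<and>
     (\<forall>j. j \<notin> B \<longrightarrow> g $ j - (transpose A *v basis_mult A g B) $ j \<ge> 0)"

definition corner :: "real^'m^'k \<Rightarrow> real^'k \<Rightarrow> 'm set \<Rightarrow> (real^'m) set" where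
  "corner A b B = {y. A *v y = b \<and> (\<forall>j. j \<notin> B \<longrightarrow> y $ j \<ge> 0)}"

end

theory Submission
  imports Defs
begin

lemma tr_inner: "(transpose A *v (p::real^'k)) \<bullet> (y::real^'m) = p \<bullet> (A *v y)"
  by (simp add: inner_vec_def matrix_vector_mult_def transpose_def sum_distrib_left sum_distrib_right mult_ac) (rule sum.swap)

lemma subspace_SB: "vec.subspace {y::real^'m. \<forall>j. j \<notin> B \<longrightarrow> y $ j = 0}"
  by (auto simp: vec.subspace_def)

lemma dim_SB:
  fixes A :: "real^'m^'k"
  assumes "is_basis A B"
  shows "vec.dim {y::real^'m. \<forall>j. j \<notin> B \<longrightarrow> y $ j = 0} = CARD('k)"
proof -
  have "vec.dim {y::real^'m. \<forall>j. j \<notin> B \<longrightarrow> y $ j = 0} = card B" by (rule dim_substandard_cart)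
  also have "card B = CARD('k)" using assms unfolding is_basis_def by simp
  finally show ?thesis .
qed

lemma basis_onto:
  fixes A :: "real^'m^'k"
  assumes "is_basis A B"
  shows "(*v) A ` {y. \<forall>j. j \<notin> B \<longrightarrow> y $ j = 0} = UNIV"
proof -
  let ?S = "{y::real^'m. \<forall>j. j \<notin> B \<longrightarrow> y $ j = 0}"
  have sp: "vec.span ?S = ?S" by (rule vec.span_eq_iff[THEN iffD2, OF subspace_SB])
  have kern: "\<forall>y. (\<forall>j. j \<notin> B \<longrightarrow> y $ j = 0) \<and> A *v y = 0 \<longrightarrow> y = 0"
    using assms unfolding is_basis_def by simp
  have inj: "inj_on ((*v) A) (vec.span ?S)"
  proof (rule inj_onI)
    fix x y assume xy: "x \<in> vec.span ?S" "y \<in> vec.span ?S" "A *v x = A *v y"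
    have "(\<forall>j. j \<notin> B \<longrightarrow> (x - y) $ j = 0) \<and> A *v (x - y) = 0"
      using xy sp by (simp add: matrix_vector_mult_diff_distrib)
    then have "x - y = 0" using kern by blast
    then show "x = y" by simp
  qed
  have "vec.dim ((*v) A ` ?S) = vec.dim ?S"
    by (rule vec.dim_image_eq[OF matrix_vector_mul_linear_gen inj])
  also have "\<dots> = CARD('k)" by (rule dim_SB[OF assms])
  finally have d: "vec.dim ((*v) A ` ?S) = CARD('k)" .
  have dU: "vec.dim (UNIV::(real^'k) set) = CARD('k)" using vec.dim_UNIV card_cart_basis by simp
  show ?thesis
    by (rule vec.subspace_dim_equal[OF vec.subspace_image[OF subspace_SB] vec.subspace_UNIV subset_UNIV]) (simp only: d dU order_refl)
qed

lemma basis_mult_ex1: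
  fixes A :: "real^'m^'k"
  assumes "is_basis A B"
  shows "\<exists>!\<pi>. \<forall>j\<in>B. (transpose A *v \<pi>) $ j = g $ j"
proof -
  let ?S = "{y::real^'m. \<forall>j. j \<notin> B \<longrightarrow> y $ j = 0}"
  define M :: "real^'k^'m" where "M = (\<chi> j. if j \<in> B then transpose A $ j else 0)"
  have Mv: "(M *v p) $ j = (if j \<in> B then (transpose A *v p) $ j else 0)" for p j
    by (simp add: M_def matrix_vector_mult_def)
  have ker: "p = 0" if Mp: "M *v p = 0" for p
  proof -
    have "p \<in> (*v) A ` ?S" using basis_onto[OF assms] by simp
    then obtain y where y: "y \<in> ?S" "p = A *v y" by (rule imageE)
    have z: "(transpose A *v p) $ j = 0" if "j \<in> B" for j
      using Mv[of p j] that Mp by simp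
    have "p \<bullet> p = (transpose A *v p) \<bullet> y" using tr_inner[of A p y] y(2) by simp
    also have "\<dots> = 0" unfolding inner_vec_def
    proof (rule sum.neutral, rule ballI)
      fix j :: 'm
      show "(transpose A *v p) $ j \<bullet> y $ j = 0"
      proof (cases "j \<in> B")
        case True then show ?thesis using z by simp
      next
        case False then show ?thesis using y(1) by simp
      qed
    qed
    finally show ?thesis by simp
  qed
  have inj: "inj_on ((*v) M) (vec.span UNIV)"
  proof (rule inj_onI)
    fix u v assume "M *v u = M *v v"
    then have "M *v (u - v) = 0" by (simp add: matrix_vector_mult_diff_distrib)
    then have "u - v = 0" by (rule ker)
    then show "u = v" by simp
  qed
  have "vec.dim ((*v) M ` UNIV) = vec.dim (UNIV :: (real^'k) set)"
    by (rule vec.dim_image_eq[OF matrix_vector_mul_linear_gen inj])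
  also have "\<dots> = CARD('k)" using vec.dim_UNIV card_cart_basis by simp
  also have "\<dots> = vec.dim ?S" using dim_SB[OF assms] by simp
  finally have d: "vec.dim ((*v) M ` UNIV) = vec.dim ?S" .
  have sub: "(*v) M ` UNIV \<subseteq> ?S" using Mv by auto
  have eq: "(*v) M ` UNIV = ?S"
    by (rule vec.subspace_dim_equal[OF vec.subspace_image[OF vec.subspace_UNIV] subspace_SB sub]) (simp add: d)
  have "(\<chi> j. if j \<in> B then g $ j else 0) \<in> ?S" by simp
  then have "(\<chi> j. if j \<in> B then g $ j else 0) \<in> (*v) M ` UNIV" using eq by simp
  then obtain p where p: "(\<chi> j. if j \<in> B then g $ j else 0) = M *v p" by (rule imageE)
  have pp: "(transpose A *v p) $ j = g $ j" if "j \<in> B" for j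
  proof -
    have "(M *v p) $ j = g $ j" using p[symmetric] that by simp
    then show ?thesis using Mv[of p j] that by simp
  qed
  show ?thesis
  proof (rule ex1I[of _ p])
    show "\<forall>j\<in>B. (transpose A *v p) $ j = g $ j" using pp by blast
  next
    fix q assume q: "\<forall>j\<in>B. (transpose A *v q) $ j = g $ j"
    have "(M *v (q - p)) $ j = 0" for j
      using q pp Mv[of "q - p" j] by (simp add: matrix_vector_mult_diff_distrib)
    then have "M *v (q - p) = 0" by (simp add: vec_eq_iff)
    then have "q - p = 0" by (rule ker)
    then show "q = p" by simp
  qed
qed

lemma basic_sol_ex1:
  fixes A :: "real^'m^'k"
  assumes "is_basis A B"
  shows "\<exists>!y. (\<forall>j. j \<notin> B \<longrightarrow> y $ j = 0) \<and> A *v y = b"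
proof -
  have "b \<in> (*v) A ` {y. \<forall>j. j \<notin> B \<longrightarrow> y $ j = 0}" using basis_onto[OF assms] by simp
  then obtain y where y0: "y \<in> {y. \<forall>j. j \<notin> B \<longrightarrow> y $ j = 0}" "b = A *v y" by (rule imageE)
  then have y: "\<forall>j. j \<notin> B \<longrightarrow> y $ j = 0" "A *v y = b" by auto
  have kern: "\<forall>y. (\<forall>j. j \<notin> B \<longrightarrow> y $ j = 0) \<and> A *v y = 0 \<longrightarrow> y = 0"
    using assms unfolding is_basis_def by simp
  show ?thesis
  proof (rule ex1I[of _ y])
    fix z assume z: "(\<forall>j. j \<notin> B \<longrightarrow> z $ j = 0) \<and> A *v z = b"
    have "(\<forall>j. j \<notin> B \<longrightarrow> (z - y) $ j = 0) \<and> A *v (z - y) = 0"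
      using z y by (simp add: matrix_vector_mult_diff_distrib)
    then have "z - y = 0" using kern by blast
    then show "z = y" by simp
  qed (use y in auto)
qed

lemma row_inner: "((A::real^'m^'k) *v y) $ r = A $ r \<bullet> y"
  by (simp add: matrix_vector_mult_def inner_vec_def mult.commute)

lemma lp_dual:
  fixes X :: "(real^'n) set" and T :: "real^'n^'p" and Q :: "real^'m^'p"
    and h :: "real^'p" and c :: "real^'n" and d :: "real^'m"
    and A :: "real^'m^'k" and b :: "real^'k" and Y :: "(real^'m) set"
  assumes X_poly: "polyhedron X"
    and Y_def: "Y = {y. A *v y = b \<and> (\<forall>j. y $ j \<ge> 0)}"
    and feas: "x0 \<in> X" "y0 \<in> Y" "T *v x0 + Q *v y0 = h"
    and lower: "\<And>x y. x \<in> X \<Longrightarrow> y \<in> Y \<Longrightarrow> T *v x + Q *v y = h \<Longrightarrow> z \<le> c \<bullet> x + d \<bullet> y"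
    and eps: "\<epsilon> > 0"
  shows "\<exists>\<alpha>. \<forall>x\<in>X. \<forall>y\<in>Y. z - \<epsilon> \<le> c \<bullet> x + d \<bullet> y + \<alpha> \<bullet> (T *v x + Q *v y - h)"
proof -
  obtain F where F: "finite F" "X = \<Inter>F" "\<forall>f\<in>F. \<exists>a \<beta>. a \<noteq> 0 \<and> f = {x. a \<bullet> x \<le> \<beta>}"
    using X_poly unfolding polyhedron_def by blast
  then obtain fa fb where fab: "\<forall>f\<in>F. f = {x. fa f \<bullet> x \<le> fb f}"
    by metis
  define G1 :: "((((real^'n) \<times> (real^'m)) \<times> real) \<times> ((real^'p) \<times> real)) set"
    where "G1 = (\<lambda>f. (((fa f, 0), fb f), (0, 0))) ` F"
  define G2 :: "((((real^'n) \<times> (real^'m)) \<times> real) \<times> ((real^'p) \<times> real)) set"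
    where "G2 = (\<lambda>j. (((0, - axis j 1), 0), (0, 0))) ` UNIV"
  define G3 :: "((((real^'n) \<times> (real^'m)) \<times> real) \<times> ((real^'p) \<times> real)) set"
    where "G3 = (\<lambda>r. (((0, A $ r), b $ r), (0, 0))) ` UNIV"
  define G4 :: "((((real^'n) \<times> (real^'m)) \<times> real) \<times> ((real^'p) \<times> real)) set"
    where "G4 = (\<lambda>r. (((0, - (A $ r)), - (b $ r)), (0, 0))) ` UNIV"
  define G5 :: "((((real^'n) \<times> (real^'m)) \<times> real) \<times> ((real^'p) \<times> real)) set"
    where "G5 = (\<lambda>s. (((T $ s, Q $ s), h $ s), (axis s 1, 0))) ` UNIV"
  define G6 :: "((((real^'n) \<times> (real^'m)) \<times> real) \<times> ((real^'p) \<times> real)) set"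
    where "G6 = (\<lambda>s. (((- (T $ s), - (Q $ s)), - (h $ s)), (- axis s 1, 0))) ` UNIV"
  define G7 :: "((((real^'n) \<times> (real^'m)) \<times> real) \<times> ((real^'p) \<times> real)) set"
    where "G7 = {(((c, d), z - \<epsilon>), (0, 1))}"
  define S where "S = G1 \<union> G2 \<union> G3 \<union> G4 \<union> G5 \<union> G6 \<union> G7"
  have finS: "finite S" unfolding S_def G1_def G2_def G3_def G4_def G5_def G6_def G7_def
    using F(1) by simp
  define K' where "K' = convex_cone hull (fst ` S)"
  have gen: "g \<bullet> v \<le> \<gamma>" if "(g, \<gamma>) \<in> fst ` S" "\<forall>k\<in>K'. (w, t) \<bullet> k \<ge> 0" "t > 0"
      and "v = - (1 / t) *\<^sub>R w" for g \<gamma> v w t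
  proof -
    have "(g, \<gamma>) \<in> K'" unfolding K'_def by (rule subsetD[OF hull_subset that(1)])
    then have "(w, t) \<bullet> (g, \<gamma>) \<ge> 0" by (rule bspec[OF that(2)])
    then have "w \<bullet> g + t * \<gamma> \<ge> 0" by simp
    then have "- (w \<bullet> g) / t \<le> \<gamma>" using that(3) by (simp add: field_simps)
    then show ?thesis using that(4) by (simp add: inner_commute)
  qed
  have inS: "fst s \<in> fst ` S" if "s \<in> S" for s using that by (rule imageI)
  have A1: "((0, -1) :: ((real^'n) \<times> (real^'m)) \<times> real) \<in> K'"
  proof (rule ccontr)
    assume nin: "(0, -1) \<notin> K'"
    have cvx: "convex K'" unfolding K'_def by (rule convex_convex_cone_hull)
    have cl: "closed K'" unfolding K'_def using finS by (simp add: closed_convex_cone_hull)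
    obtain a b0 where ab: "a \<bullet> (0, -1) < b0" "\<forall>k\<in>K'. a \<bullet> k > b0"
      using separating_hyperplane_closed_point[OF cvx cl nin] by blast
    have "0 \<in> K'" unfolding K'_def by (rule convex_cone_hull_contains_0)
    then have "a \<bullet> 0 > b0" by (rule bspec[OF ab(2)])
    then have b0: "b0 < 0" by simp
    have conK: "conic K'" unfolding K'_def by (rule conic_convex_cone_hull)
    have nonneg: "\<forall>k\<in>K'. a \<bullet> k \<ge> 0"
    proof
      fix k assume k: "k \<in> K'"
      show "a \<bullet> k \<ge> 0"
      proof (rule ccontr)
        assume neg: "\<not> a \<bullet> k \<ge> 0"
        have "b0 / (a \<bullet> k) \<ge> 0" using neg b0 by (simp add: divide_nonpos_neg)
        then have "(b0 / (a \<bullet> k)) *\<^sub>R k \<in> K'"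
          using k conK unfolding conic_def by blast
        then have "a \<bullet> ((b0 / (a \<bullet> k)) *\<^sub>R k) > b0" by (rule bspec[OF ab(2)])
        moreover have "a \<bullet> ((b0 / (a \<bullet> k)) *\<^sub>R k) = b0" using neg by simp
        ultimately show False by simp
      qed
    qed
    obtain w t where wt: "a = (w, t)" by (cases a)
    have t: "t > 0" using ab(1) b0 wt by simp
    define v where "v = - (1 / t) *\<^sub>R w"
    obtain x y where xy: "v = (x, y)" by (cases v)
    have nn: "\<forall>k\<in>K'. (w, t) \<bullet> k \<ge> 0" using nonneg wt by simp
    have G: "g \<bullet> (x, y) \<le> \<gamma>" if "s \<in> S" "fst s = (g, \<gamma>)" for s g \<gamma>
    proof -
      have "(g, \<gamma>) \<in> fst ` S" using inS[OF that(1)] that(2) by simp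
      from gen[OF this nn t v_def] show ?thesis using xy by simp
    qed
    have xX: "x \<in> X"
    proof -
      have "x \<in> f" if "f \<in> F" for f
      proof -
        have "(((fa f, 0), fb f), (0, 0)) \<in> G1" unfolding G1_def using that by (rule rev_image_eqI) simp
        then have "(((fa f, 0), fb f), (0, 0)) \<in> S" unfolding S_def by simp
        from G[OF this] have "(fa f, 0) \<bullet> (x, y) \<le> fb f" by simp
        then show ?thesis using fab that by auto
      qed
      then show ?thesis using F(2) by blast
    qed
    have yY: "y \<in> Y"
    proof -
      have "y $ j \<ge> 0" for j
      proof -
        have "(((0, - axis j 1), 0), (0, 0)) \<in> G2" unfolding G2_def by (rule rev_image_eqI[OF UNIV_I]) simp
        then have "(((0, - axis j 1), 0), (0, 0)) \<in> S" unfolding S_def by simp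
        from G[OF this] have "(0, - axis j 1) \<bullet> (x, y) \<le> 0" by simp
        then show ?thesis by (simp add: inner_axis')
      qed
      moreover have "(A *v y) $ r = b $ r" for r
      proof -
        have "(((0, A $ r), b $ r), (0, 0)) \<in> G3" unfolding G3_def by (rule rev_image_eqI[OF UNIV_I]) simp
        then have "(((0, A $ r), b $ r), (0, 0)) \<in> S" unfolding S_def by simp
        from G[OF this] have 1: "(0, A $ r) \<bullet> (x, y) \<le> b $ r" by simp
        have "(((0, - (A $ r)), - (b $ r)), (0, 0)) \<in> G4" unfolding G4_def by (rule rev_image_eqI[OF UNIV_I]) simp
        then have "(((0, - (A $ r)), - (b $ r)), (0, 0)) \<in> S" unfolding S_def by simp
        from G[OF this] have 2: "(0, - (A $ r)) \<bullet> (x, y) \<le> - (b $ r)" by simp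
        show ?thesis using 1 2 by (simp add: row_inner)
      qed
      ultimately show ?thesis unfolding Y_def by (simp add: vec_eq_iff)
    qed
    have hx: "T *v x + Q *v y = h"
    proof -
      have "(T *v x + Q *v y) $ s = h $ s" for s
      proof -
        have "(((T $ s, Q $ s), h $ s), (axis s 1, 0)) \<in> G5" unfolding G5_def by (rule rev_image_eqI[OF UNIV_I]) simp
        then have "(((T $ s, Q $ s), h $ s), (axis s 1, 0)) \<in> S" unfolding S_def by simp
        from G[OF this] have 1: "(T $ s, Q $ s) \<bullet> (x, y) \<le> h $ s" by simp
        have "(((- (T $ s), - (Q $ s)), - (h $ s)), (- axis s 1, 0)) \<in> G6" unfolding G6_def by (rule rev_image_eqI[OF UNIV_I]) simp
        then have "(((- (T $ s), - (Q $ s)), - (h $ s)), (- axis s 1, 0)) \<in> S" unfolding S_def by simp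
        from G[OF this] have 2: "(- (T $ s), - (Q $ s)) \<bullet> (x, y) \<le> - (h $ s)" by simp
        show ?thesis using 1 2 by (simp add: row_inner)
      qed
      then show ?thesis by (simp add: vec_eq_iff)
    qed
    have "(((c, d), z - \<epsilon>), (0, 1)) \<in> S" unfolding S_def G7_def by simp
    from G[OF this] have "(c, d) \<bullet> (x, y) \<le> z - \<epsilon>" by simp
    then show False using lower[OF xX yY hx] eps by simp
  qed
  define K where "K = convex_cone hull S"
  have "K' \<subseteq> fst ` K" unfolding K'_def K_def
    by (rule hull_minimal[where S=convex_cone, OF image_mono[where f=fst, OF hull_subset[of S convex_cone]] convex_cone_linear_image[OF conjI[OF convex_cone_convex_cone_hull[of S] linear_fst]]])
  then have "(0, -1) \<in> fst ` K" using A1 by (rule subsetD)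
  then obtain k where k: "k \<in> K" "(0, -1) = fst k" by (rule imageE)
  obtain \<alpha>p l where kk: "k = ((0, -1), (\<alpha>p, l))" using k(2) by (metis prod.collapse)
  define \<psi> where "\<psi> x y (q::(((real^'n) \<times> (real^'m)) \<times> real) \<times> ((real^'p) \<times> real)) =
     fst (fst q) \<bullet> (x, y) + fst (snd q) \<bullet> (h - T *v x - Q *v y) + snd (snd q) * (z - \<epsilon> - c \<bullet> x - d \<bullet> y) - snd (fst q)" for x y q
  define C where "C = {q. 0 \<le> snd (snd q) \<and> (\<forall>x\<in>X. \<forall>y\<in>Y. \<psi> x y q \<le> 0)}"
  have \<psi>add: "\<psi> x y (q1 + q2) = \<psi> x y q1 + \<psi> x y q2" for x y q1 q2
    by (simp add: \<psi>_def inner_add_left algebra_simps)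
  have \<psi>scale: "\<psi> x y (a *\<^sub>R q1) = a * \<psi> x y q1" for x y a q1
    by (simp add: \<psi>_def algebra_simps)
  have \<psi>0: "\<psi> x y 0 = 0" for x y by (simp add: \<psi>_def)
  have ccC: "convex_cone C"
    unfolding convex_cone_iff
  proof (intro conjI ballI allI impI)
    show "0 \<in> C" unfolding C_def using \<psi>0 by simp
  next
    fix q1 q2 assume "q1 \<in> C" "q2 \<in> C"
    then show "q1 + q2 \<in> C" unfolding C_def using \<psi>add by (simp add: add_nonpos_nonpos)
  next
    fix q1 and a :: real assume "q1 \<in> C" "0 \<le> a"
    then show "a *\<^sub>R q1 \<in> C" unfolding C_def using \<psi>scale by (simp add: mult_nonneg_nonpos)
  qed
  have SC: "S \<subseteq> C"
  proof -
    have "G1 \<subseteq> C"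
    proof
      fix q assume "q \<in> G1"
      then obtain f where f: "f \<in> F" "q = (((fa f, 0), fb f), (0, 0))" unfolding G1_def by blast
      have "fa f \<bullet> x \<le> fb f" if "x \<in> X" for x
        using that f(1) fab F(2) by blast
      then show "q \<in> C" unfolding C_def \<psi>_def f(2) by simp
    qed
    moreover have "G2 \<subseteq> C" unfolding G2_def C_def \<psi>_def Y_def by (auto simp: inner_axis')
    moreover have "G3 \<subseteq> C" unfolding G3_def C_def \<psi>_def Y_def by (auto simp: row_inner[symmetric])
    moreover have "G4 \<subseteq> C" unfolding G4_def C_def \<psi>_def Y_def by (auto simp: row_inner[symmetric])
    moreover have "G5 \<subseteq> C" unfolding G5_def C_def \<psi>_def by (auto simp: row_inner[symmetric] inner_axis')
    moreover have "G6 \<subseteq> C" unfolding G6_def C_def \<psi>_def by (auto simp: row_inner[symmetric] inner_axis')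
    moreover have "G7 \<subseteq> C" unfolding G7_def C_def \<psi>_def by auto
    ultimately show ?thesis unfolding S_def by blast
  qed
  have "K \<subseteq> C" unfolding K_def by (rule hull_minimal[where S=convex_cone, OF SC ccC])
  then have kC: "k \<in> C" using k(1) by blast
  then have l0: "l \<ge> 0" and kb: "\<forall>x\<in>X. \<forall>y\<in>Y. \<alpha>p \<bullet> (h - T *v x - Q *v y) + l * (z - \<epsilon> - c \<bullet> x - d \<bullet> y) \<le> - 1"
    unfolding C_def \<psi>_def kk by auto
  have lpos: "l > 0"
  proof (rule ccontr)
    assume "\<not> l > 0"
    then have "l = 0" using l0 by simp
    have "\<alpha>p \<bullet> (h - T *v x0 - Q *v y0) + l * (z - \<epsilon> - c \<bullet> x0 - d \<bullet> y0) \<le> - 1"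
      using kb feas(1,2) by blast
    moreover have "h - T *v x0 - Q *v y0 = 0" using feas(3) by (simp add: algebra_simps)
    ultimately show False using \<open>l = 0\<close> by simp
  qed
  show ?thesis
  proof (intro exI ballI)
    fix x y assume xy: "x \<in> X" "y \<in> Y"
    have 1: "\<alpha>p \<bullet> (h - T *v x - Q *v y) + l * (z - \<epsilon> - c \<bullet> x - d \<bullet> y) \<le> - 1" using kb xy by blast
    have 2: "\<alpha>p \<bullet> (h - T *v x - Q *v y) = - (\<alpha>p \<bullet> (T *v x + Q *v y - h))" by (simp add: inner_diff_right inner_add_right)
    have "l * (z - \<epsilon>) \<le> l * (c \<bullet> x + d \<bullet> y) + \<alpha>p \<bullet> (T *v x + Q *v y - h)" using 1 2 by (simp add: algebra_simps)
    then have "l * (z - \<epsilon>) \<le> l * (c \<bullet> x + d \<bullet> y + (1 / l) *\<^sub>R \<alpha>p \<bullet> (T *v x + Q *v y - h))"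
      using lpos by (simp add: algebra_simps)
    then show "z - \<epsilon> \<le> c \<bullet> x + d \<bullet> y + (1 / l) *\<^sub>R \<alpha>p \<bullet> (T *v x + Q *v y - h)"
      using lpos by simp
  qed
qed

lemma sigma_le: "s \<in> S \<Longrightarrow> sigma S \<alpha> \<le> ereal (\<alpha> \<bullet> s)"
  unfolding sigma_def by (rule INF_lower)

lemma sigma_sum_ge:
  assumes "x0 \<in> X" "y0 \<in> Y" "\<And>x y. x \<in> X \<Longrightarrow> y \<in> Y \<Longrightarrow> K \<le> u \<bullet> x + v \<bullet> y"
  shows "ereal K \<le> sigma X u + sigma Y v"
proof -
  have hY: "ereal (K - u \<bullet> x) \<le> sigma Y v" if "x \<in> X" for x
    unfolding sigma_def
  proof (rule INF_greatest)
    fix s assume "s \<in> Y"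
    then have "K \<le> u \<bullet> x + v \<bullet> s" using assms(3) that by blast
    then show "ereal (K - u \<bullet> x) \<le> ereal (v \<bullet> s)" by simp
  qed
  have up: "sigma Y v \<le> ereal (v \<bullet> y0)" using sigma_le[OF assms(2)] .
  obtain r where r: "sigma Y v = ereal r"
    using hY[OF assms(1)] up by (cases "sigma Y v") auto
  have "ereal (K - r) \<le> sigma X u"
    unfolding sigma_def
  proof (rule INF_greatest)
    fix x assume "x \<in> X"
    then have "ereal (K - u \<bullet> x) \<le> ereal r" using hY r by metis
    then show "ereal (K - r) \<le> ereal (u \<bullet> x)" by simp
  qed
  then have "ereal (K - r) + ereal r \<le> sigma X u + ereal r" by (rule add_right_mono)
  then show ?thesis using r by simp
qed

theorem mainTheorem6:
  fixes X :: "(real^'n) set" and T :: "real^'n^'p" and Q :: "real^'m^'p"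
    and h :: "real^'p" and c :: "real^'n" and d :: "real^'m"
    and A :: "real^'m^'k" and b :: "real^'k"
    and Y :: "(real^'m) set" and zstar :: ereal
    and \<alpha>hat :: "real^'p" and B :: "'m set"
  assumes X_poly: "polyhedron X" and X_ne: "X \<noteq> {}"
    and Y_def: "Y = {y. A *v y = b \<and> (\<forall>j. y $ j \<ge> 0)}"
    and A_rank: "rank A = CARD('k)"
    and zstar_def: "zstar = (INF xy\<in>{(x, y). T *v x + Q *v y = h \<and> x \<in> X \<and> y \<in> Y}.
                                ereal (c \<bullet> fst xy + d \<bullet> snd xy))"
    and zstar_finite: "\<bar>zstar\<bar> \<noteq> \<infinity>"
    and \<alpha>hat_opt: "\<forall>\<alpha>::real^'p.
          ereal (- (\<alpha> \<bullet> h)) + sigma X (c + transpose T *v \<alpha>) + sigma Y (transpose Q *v \<alpha> + d)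
          \<le> ereal (- (\<alpha>hat \<bullet> h)) + sigma X (c + transpose T *v \<alpha>hat) + sigma Y (transpose Q *v \<alpha>hat + d)"
    and B_opt: "optimal_basis A b (transpose Q *v \<alpha>hat + d) B"
  shows "(INF x\<theta>\<in>{(x, \<theta>). x \<in> X \<and> (h - T *v x, \<theta>) \<in> epi (fval d Q (corner A b B))}.
            ereal (c \<bullet> fst x\<theta> + snd x\<theta>)) = zstar
       \<and> (\<forall>x \<theta>. (h - T *v x, \<theta>) \<in> epi (fval d Q (corner A b B)) \<longrightarrow>
            ereal (\<alpha>hat \<bullet> (h - T *v x) + \<theta>) \<ge> sigma (epi (fval d Q Y)) (\<alpha>hat, 1))"
proof -
  define g where "g = transpose Q *v \<alpha>hat + d"
  define \<pi> where "\<pi> = basis_mult A g B"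
  define y0 where "y0 = basic_sol A b B"
  have isb: "is_basis A B" using B_opt unfolding optimal_basis_def g_def by blast
  have \<pi>prop: "\<forall>j\<in>B. (transpose A *v \<pi>) $ j = g $ j"
    unfolding \<pi>_def basis_mult_def by (rule theI'[OF basis_mult_ex1[OF isb]])
  have y0prop: "(\<forall>j. j \<notin> B \<longrightarrow> y0 $ j = 0) \<and> A *v y0 = b"
    unfolding y0_def basic_sol_def by (rule theI'[OF basic_sol_ex1[OF isb]])
  have y0Y: "y0 \<in> Y"
  proof -
    have "y0 $ j \<ge> 0" for j
    proof (cases "j \<in> B")
      case True then show ?thesis using B_opt unfolding optimal_basis_def y0_def by blast
    next
      case False then show ?thesis using y0prop by simp
    qed
    then show ?thesis unfolding Y_def using y0prop by simp
  qed
  have gy0: "g \<bullet> y0 = \<pi> \<bullet> b"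
  proof -
    have "g \<bullet> y0 = (transpose A *v \<pi>) \<bullet> y0"
      unfolding inner_vec_def
    proof (rule sum.cong[OF refl])
      fix j :: 'm
      show "g $ j \<bullet> y0 $ j = (transpose A *v \<pi>) $ j \<bullet> y0 $ j"
      proof (cases "j \<in> B")
        case True then show ?thesis using \<pi>prop by simp
      next
        case False then show ?thesis using y0prop by simp
      qed
    qed
    also have "\<dots> = \<pi> \<bullet> b" using tr_inner y0prop by metis
    finally show ?thesis .
  qed
  have redc: "g $ j - (transpose A *v \<pi>) $ j \<ge> 0" if "j \<notin> B" for j
    using B_opt that unfolding optimal_basis_def \<pi>_def g_def by blast
  have corner_ge: "\<pi> \<bullet> b \<le> g \<bullet> y" if "y \<in> corner A b B" for y
  proof -
    have Ay: "A *v y = b" and yN: "\<forall>j. j \<notin> B \<longrightarrow> y $ j \<ge> 0" using that unfolding corner_def by auto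
    have "g \<bullet> y - \<pi> \<bullet> b = g \<bullet> y - (transpose A *v \<pi>) \<bullet> y" using tr_inner Ay by metis
    also have "\<dots> = (\<Sum>j\<in>UNIV. (g $ j - (transpose A *v \<pi>) $ j) * y $ j)"
      unfolding inner_vec_def by (simp add: sum_subtractf left_diff_distrib)
    also have "\<dots> \<ge> 0"
    proof (rule sum_nonneg)
      fix j :: 'm
      show "0 \<le> (g $ j - (transpose A *v \<pi>) $ j) * y $ j"
      proof (cases "j \<in> B")
        case True then show ?thesis using \<pi>prop by simp
      next
        case False then show ?thesis using redc yN by simp
      qed
    qed
    finally show ?thesis by simp
  qed
  have Ysub: "Y \<subseteq> corner A b B" unfolding Y_def corner_def by auto
  obtain z where zs: "zstar = ereal z" using zstar_finite by (cases zstar) auto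
  define FS where "FS = {(x, y). T *v x + Q *v y = h \<and> x \<in> X \<and> y \<in> Y}"
  have "FS \<noteq> {}"
  proof
    assume "FS = {}"
    then have "zstar = \<infinity>" unfolding zstar_def FS_def[symmetric] by (simp add: top_ereal_def)
    then show False using zstar_finite by simp
  qed
  then obtain x0 y0' where f0: "x0 \<in> X" "y0' \<in> Y" "T *v x0 + Q *v y0' = h" unfolding FS_def by auto
  have lower: "z \<le> c \<bullet> x + d \<bullet> y" if "x \<in> X" "y \<in> Y" "T *v x + Q *v y = h" for x y
  proof -
    have "zstar \<le> ereal (c \<bullet> fst (x, y) + d \<bullet> snd (x, y))"
      unfolding zstar_def by (rule INF_lower) (use that in auto)
    then show ?thesis using zs by simp
  qed
  define L where "L = ereal (- (\<alpha>hat \<bullet> h)) + sigma X (c + transpose T *v \<alpha>hat) + sigma Y g"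
  have inner_T: "(c + transpose T *v \<alpha>) \<bullet> x = c \<bullet> x + \<alpha> \<bullet> (T *v x)" for \<alpha> x
    by (simp only: inner_add_left tr_inner)
  have inner_Q: "(transpose Q *v \<alpha> + d) \<bullet> y = \<alpha> \<bullet> (Q *v y) + d \<bullet> y" for \<alpha> y
    by (simp only: inner_add_left tr_inner)
  have Lge: "ereal (z - \<epsilon>) \<le> L" if eps: "\<epsilon> > 0" for \<epsilon>
  proof -
    obtain \<alpha> where \<alpha>: "\<forall>x\<in>X. \<forall>y\<in>Y. z - \<epsilon> \<le> c \<bullet> x + d \<bullet> y + \<alpha> \<bullet> (T *v x + Q *v y - h)"
      using lp_dual[OF X_poly Y_def f0 lower eps] by blast
    have "ereal (z - \<epsilon> + \<alpha> \<bullet> h) \<le> sigma X (c + transpose T *v \<alpha>) + sigma Y (transpose Q *v \<alpha> + d)"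
    proof (rule sigma_sum_ge[OF f0(1,2)])
      fix x y assume "x \<in> X" "y \<in> Y"
      then have "z - \<epsilon> \<le> c \<bullet> x + d \<bullet> y + \<alpha> \<bullet> (T *v x + Q *v y - h)" using \<alpha> by blast
      then show "z - \<epsilon> + \<alpha> \<bullet> h \<le> (c + transpose T *v \<alpha>) \<bullet> x + (transpose Q *v \<alpha> + d) \<bullet> y"
        unfolding inner_T inner_Q by (simp add: inner_add_right inner_diff_right)
    qed
    then have "ereal (- (\<alpha> \<bullet> h)) + ereal (z - \<epsilon> + \<alpha> \<bullet> h) \<le> ereal (- (\<alpha> \<bullet> h)) + (sigma X (c + transpose T *v \<alpha>) + sigma Y (transpose Q *v \<alpha> + d))"
      by (rule add_left_mono)
    also have "\<dots> \<le> L" using \<alpha>hat_opt unfolding L_def g_def by (simp add: add.assoc)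
    finally show ?thesis by simp
  qed
  have zL: "ereal z \<le> L"
  proof (rule ereal_le_epsilon2)
    fix e :: real assume "e > 0"
    then have "ereal (z - e) + ereal e \<le> L + ereal e" using Lge by (intro add_right_mono) auto
    then show "ereal z \<le> L + ereal e" by simp
  qed
  have key: "z \<le> c \<bullet> x + d \<bullet> y" if "x \<in> X" "y \<in> corner A b B" "Q *v y = h - T *v x" for x y
  proof -
    have "L \<le> ereal (- (\<alpha>hat \<bullet> h)) + ereal ((c + transpose T *v \<alpha>hat) \<bullet> x) + ereal (g \<bullet> y)"
    proof -
      have 1: "sigma X (c + transpose T *v \<alpha>hat) \<le> ereal ((c + transpose T *v \<alpha>hat) \<bullet> x)"
        by (rule sigma_le[OF that(1)])
      have "sigma Y g \<le> ereal (g \<bullet> y0)" by (rule sigma_le[OF y0Y])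
      also have "\<dots> \<le> ereal (g \<bullet> y)" using gy0 corner_ge[OF that(2)] by simp
      finally have 2: "sigma Y g \<le> ereal (g \<bullet> y)" .
      show ?thesis unfolding L_def using 1 2 by (intro add_mono order_refl)
    qed
    also have "\<dots> = ereal (c \<bullet> x + d \<bullet> y)"
      unfolding g_def inner_T inner_Q that(3) by (simp add: inner_diff_right)
    finally have "L \<le> ereal (c \<bullet> x + d \<bullet> y)" .
    with zL have "ereal z \<le> ereal (c \<bullet> x + d \<bullet> y)" by (rule order_trans)
    then show ?thesis by simp
  qed
  have epi_mem: "(w, t) \<in> epi f \<longleftrightarrow> f w \<le> ereal t" for f and w :: "real^'p" and t unfolding epi_def by simp
  have part1: "(INF x\<theta>\<in>{(x, \<theta>). x \<in> X \<and> (h - T *v x, \<theta>) \<in> epi (fval d Q (corner A b B))}.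
            ereal (c \<bullet> fst x\<theta> + snd x\<theta>)) = zstar"
  proof (rule antisym)
    show "(INF x\<theta>\<in>{(x, \<theta>). x \<in> X \<and> (h - T *v x, \<theta>) \<in> epi (fval d Q (corner A b B))}.
            ereal (c \<bullet> fst x\<theta> + snd x\<theta>)) \<le> zstar"
      unfolding zstar_def
    proof (rule INF_mono)
      fix m assume "m \<in> {(x, y). T *v x + Q *v y = h \<and> x \<in> X \<and> y \<in> Y}"
      then obtain x y where m: "m = (x, y)" "T *v x + Q *v y = h" "x \<in> X" "y \<in> Y" by auto
      have "fval d Q (corner A b B) (h - T *v x) \<le> ereal (d \<bullet> y)"
        unfolding fval_def by (rule INF_lower) (use m Ysub in \<open>auto simp: algebra_simps\<close>)
      then have "(x, d \<bullet> y) \<in> {(x, \<theta>). x \<in> X \<and> (h - T *v x, \<theta>) \<in> epi (fval d Q (corner A b B))}"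
        using m epi_mem by simp
      then show "\<exists>n\<in>{(x, \<theta>). x \<in> X \<and> (h - T *v x, \<theta>) \<in> epi (fval d Q (corner A b B))}.
                   ereal (c \<bullet> fst n + snd n) \<le> ereal (c \<bullet> fst m + d \<bullet> snd m)"
        using m by force
    qed
  next
    show "zstar \<le> (INF x\<theta>\<in>{(x, \<theta>). x \<in> X \<and> (h - T *v x, \<theta>) \<in> epi (fval d Q (corner A b B))}.
            ereal (c \<bullet> fst x\<theta> + snd x\<theta>))"
    proof (rule INF_greatest)
      fix n assume "n \<in> {(x, \<theta>). x \<in> X \<and> (h - T *v x, \<theta>) \<in> epi (fval d Q (corner A b B))}"
      then obtain x \<theta> where n: "n = (x, \<theta>)" "x \<in> X" "fval d Q (corner A b B) (h - T *v x) \<le> ereal \<theta>"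
        using epi_mem by auto
      have "ereal (z - c \<bullet> x) \<le> fval d Q (corner A b B) (h - T *v x)"
        unfolding fval_def
      proof (rule INF_greatest)
        fix y assume "y \<in> {y \<in> corner A b B. Q *v y = h - T *v x}"
        then have "z \<le> c \<bullet> x + d \<bullet> y" using key[OF n(2)] by blast
        then show "ereal (z - c \<bullet> x) \<le> ereal (d \<bullet> y)" by simp
      qed
      then have "ereal (z - c \<bullet> x) \<le> ereal \<theta>" using n(3) by (rule order_trans)
      then show "zstar \<le> ereal (c \<bullet> fst n + snd n)" using zs n by simp
    qed
  qed
  have part2: "ereal (\<alpha>hat \<bullet> (h - T *v x) + \<theta>) \<ge> sigma (epi (fval d Q Y)) (\<alpha>hat, 1)"
    if "(h - T *v x, \<theta>) \<in> epi (fval d Q (corner A b B))" for x \<theta>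
  proof -
    define w where "w = h - T *v x"
    have th: "fval d Q (corner A b B) w \<le> ereal \<theta>" using that epi_mem w_def by simp
    have "ereal (\<pi> \<bullet> b - \<alpha>hat \<bullet> w) \<le> fval d Q (corner A b B) w"
      unfolding fval_def
    proof (rule INF_greatest)
      fix y assume y: "y \<in> {y \<in> corner A b B. Q *v y = w}"
      then have "\<pi> \<bullet> b \<le> g \<bullet> y" using corner_ge by blast
      also have "\<dots> = \<alpha>hat \<bullet> w + d \<bullet> y" unfolding g_def inner_Q using y by simp
      finally show "ereal (\<pi> \<bullet> b - \<alpha>hat \<bullet> w) \<le> ereal (d \<bullet> y)" by simp
    qed
    then have "ereal (\<pi> \<bullet> b - \<alpha>hat \<bullet> w) \<le> ereal \<theta>" using th by (rule order_trans)
    then have 1: "\<pi> \<bullet> b \<le> \<alpha>hat \<bullet> w + \<theta>" by simp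
    have "fval d Q Y (Q *v y0) \<le> ereal (d \<bullet> y0)"
      unfolding fval_def by (rule INF_lower) (use y0Y in auto)
    then have "(Q *v y0, d \<bullet> y0) \<in> epi (fval d Q Y)" using epi_mem by simp
    then have "sigma (epi (fval d Q Y)) (\<alpha>hat, 1) \<le> ereal ((\<alpha>hat, 1) \<bullet> (Q *v y0, d \<bullet> y0))"
      by (rule sigma_le)
    also have "\<dots> = ereal (g \<bullet> y0)" unfolding g_def inner_Q by simp
    also have "\<dots> \<le> ereal (\<alpha>hat \<bullet> (h - T *v x) + \<theta>)" using gy0 1 w_def by simp
    finally show ?thesis .
  qed
  show ?thesis
  proof (intro conjI allI impI)
    show "(INF x\<theta>\<in>{(x, \<theta>). x \<in> X \<and> (h - T *v x, \<theta>) \<in> epi (fval d Q (corner A b B))}.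
            ereal (c \<bullet> fst x\<theta> + snd x\<theta>)) = zstar" by (rule part1)
  next
    fix x \<theta> assume "(h - T *v x, \<theta>) \<in> epi (fval d Q (corner A b B))"
    then show "ereal (\<alpha>hat \<bullet> (h - T *v x) + \<theta>) \<ge> sigma (epi (fval d Q Y)) (\<alpha>hat, 1)" by (rule part2)
  qed
qed

end
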